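(* Let $n \ge 2$ and let $K$ be a compact convex subset of $\mathbb{R}^n$ such that, for every unit vector $u$, the projection $\Xi_u$ contains a translate of $K_u$. Then there exists $x \in \mathbb{R}^n$ such that $$K + x \subseteq D \subseteq \tfrac{n}{n-1}\,\Xi.$$
   Context: $e_1,\dots,e_n$ are the standard basis vectors of $\mathbb{R}^n$ and $o$ is the origin. $\Xi$ is the simplex $\mathrm{conv}\{o, e_1, \dots, e_n\}$. $D$ is the convex hull of $\Xi$ and the point $p = (\tfrac{1}{n-1}, \dots, \tfrac{1}{n-1})$; equivalently $D = \{x \in \mathbb{R}^n : x_i \ge 0 \text{ for all } i,\ \sum_{j \ne i} x_j \le 1 \text{ for all } i\}$. For a set $S$ and unit vector $u$, $S_u$ denotes the orthogonal projection of $S$ onto $u^\perp$; "$A$ contains a translate of $B$" means $B + w \subseteq A$ for some vector $w$. *)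

theory Defs
  imports "HOL-Analysis.Analysis"
begin

definition std_simplex :: "(real ^ 'n) set" where
  "std_simplex = convex hull (insert 0 (range (\<lambda>i. axis i 1)))"

definition simplex_apex :: "real ^ 'n" where
  "simplex_apex = (\<chi> i. 1 / (real CARD('n) - 1))"

definition simplex_D :: "(real ^ 'n) set" where
  "simplex_D = convex hull (insert simplex_apex std_simplex)"

definition proj_perp :: "real ^ 'n \<Rightarrow> (real ^ 'n) set \<Rightarrow> (real ^ 'n) set" where
  "proj_perp u S = (\<lambda>x. x - (x \<bullet> u) *\<^sub>R u) ` S"

definition contains_translate :: "(real ^ 'n) set \<Rightarrow> (real ^ 'n) set \<Rightarrow> bool" where
  "contains_translate A B \<longleftrightarrow> (\<exists>w. (\<lambda>y. y + w) ` B \<subseteq> A)"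

end

theory Submission
  imports Defs
begin
lemma basis_range: "range (\<lambda>i. axis i (1::real)) = (Basis :: (real^'n) set)"
  by (auto simp: Basis_vec_def)
lemma sum_basis_cart: "sum (\<lambda>b. x \<bullet> b) (Basis :: (real^'n) set) = (\<Sum>i\<in>UNIV. x$i)"
proof -
  have "inj (\<lambda>i::'n. axis i (1::real))" by (auto simp: inj_on_def axis_eq_axis)
  then have "sum (\<lambda>b. x \<bullet> b) (range (\<lambda>i. axis i (1::real))) = (\<Sum>i\<in>UNIV. x \<bullet> axis i 1)"
    by (simp add: sum.reindex)
  then show ?thesis by (simp add: basis_range cart_eq_inner_axis)
qed
lemma simplex_char: "(std_simplex :: (real^'n) set) = {x. (\<forall>i. 0 \<le> x$i) \<and> (\<Sum>i\<in>UNIV. x$i) \<le> 1}"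
  unfolding std_simplex_def basis_range std_simplex sum_basis_cart
  by (auto simp: Basis_vec_def cart_eq_inner_axis)
lemma D_mem:
  fixes x :: "real^'n"
  assumes n2: "CARD('n) \<ge> 2" and nn: "\<And>i. 0 \<le> x$i"
    and le: "\<And>i. (\<Sum>j\<in>UNIV. x$j) - x$i \<le> 1"
  shows "x \<in> simplex_D"
proof -
  define s where "s = (\<Sum>j\<in>UNIV. x$j)"
  define n where "n = real CARD('n)"
  have n2': "n \<ge> 2" using n2 unfolding n_def by simp
  have cvx: "convex (simplex_D :: (real^'n) set)" unfolding simplex_D_def by (rule convex_convex_hull)
  have subS: "(std_simplex :: (real^'n) set) \<subseteq> simplex_D"
    unfolding simplex_D_def by (meson hull_subset subset_insertI subset_trans)
  have pD: "(simplex_apex :: real^'n) \<in> simplex_D"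
    unfolding simplex_D_def by (simp add: hull_inc)
  show ?thesis
  proof (cases "s \<le> 1")
    case True
    then have "x \<in> std_simplex" unfolding simplex_char using nn s_def by auto
    then show ?thesis using subS by auto
  next
    case False
    define t where "t = (n - 1) * (s - 1)"
    have "(\<Sum>i\<in>UNIV. s - x$i) \<le> (\<Sum>i\<in>(UNIV::'n set). 1)"
      by (rule sum_mono) (use le s_def in auto)
    then have "n * s - s \<le> n" by (simp add: sum_subtractf s_def n_def)
    then have t1: "t \<le> 1" unfolding t_def by (simp add: algebra_simps)
    have t0: "0 \<le> t" using False n2' unfolding t_def by simp
    have xi: "x$i \<ge> s - 1" for i using le[of i] s_def by simp
    define z' where "z' = x - (\<chi> i. s - 1)"
    have z'nn: "0 \<le> z'$i" for i using xi[of i] by (simp add: z'_def)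
    have z'sum: "(\<Sum>i\<in>UNIV. z'$i) = 1 - t"
      by (simp add: z'_def sum_subtractf sum.distrib s_def[symmetric] n_def[symmetric] t_def algebra_simps)
    have tp: "t *\<^sub>R (simplex_apex :: real^'n) = (\<chi> i. s - 1)"
      using n2' by (simp add: simplex_apex_def t_def n_def[symmetric] vec_eq_iff)
    show ?thesis
    proof (cases "t = 1")
      case True
      then have "\<forall>i\<in>UNIV. z'$i = 0" using z'sum z'nn
        by (subst sum_nonneg_eq_0_iff[symmetric]) auto
      then have "x = simplex_apex" using tp True by (simp add: z'_def vec_eq_iff)
      then show ?thesis using pD by simp
    next
      case False
      define z where "z = (1 / (1 - t)) *\<^sub>R z'"
      have "z \<in> std_simplex" unfolding simplex_char using z'nn z'sum t1 False
        by (auto simp: z_def sum_divide_distrib[symmetric])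
      then have zD: "z \<in> simplex_D" using subS by auto
      have "x = t *\<^sub>R simplex_apex + (1 - t) *\<^sub>R z"
        using False by (simp add: tp z_def z'_def)
      then show ?thesis using convexD[OF cvx pD zD, of t "1-t"] t0 t1 by simp
    qed
  qed
qed
theorem theorem4p1:
  fixes K :: "(real ^ 'n) set"
  assumes "CARD('n) \<ge> 2"
    and "compact K" and "convex K"
    and "\<And>u. norm u = 1 \<Longrightarrow>
           contains_translate (proj_perp u (std_simplex :: (real ^ 'n) set)) (proj_perp u K)"
  shows "\<exists>x. (\<lambda>y. y + x) ` K \<subseteq> (simplex_D :: (real ^ 'n) set) \<and>
             (simplex_D :: (real ^ 'n) set)
               \<subseteq> (\<lambda>y. (real CARD('n) / (real CARD('n) - 1)) *\<^sub>R y) ` std_simplex"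
proof -
  define n where "n = real CARD('n)"
  have n2': "n \<ge> 2" using assms(1) unfolding n_def by simp
  define c where "c = n / (n - 1)"
  have c1: "c \<ge> 1" using n2' unfolding c_def by simp
  have part2: "(simplex_D :: (real ^ 'n) set) \<subseteq> (\<lambda>y. c *\<^sub>R y) ` std_simplex"
    unfolding simplex_D_def
  proof (rule hull_minimal)
    show "convex ((\<lambda>y. c *\<^sub>R y) ` (std_simplex :: (real ^ 'n) set))"
      by (rule convex_scaling) (simp add: std_simplex_def)
    have mem: "y \<in> (\<lambda>y. c *\<^sub>R y) ` std_simplex"
      if "\<forall>i. 0 \<le> y$i" "(\<Sum>i\<in>UNIV. y$i) \<le> c" for y :: "real^'n"
    proof -
      have "(1/c) *\<^sub>R y \<in> std_simplex" unfolding simplex_char using that c1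
        by (auto simp: sum_divide_distrib[symmetric])
      moreover have "y = c *\<^sub>R ((1/c) *\<^sub>R y)" using c1 by simp
      ultimately show ?thesis by blast
    qed
    have "simplex_apex \<in> (\<lambda>y. c *\<^sub>R y) ` (std_simplex :: (real ^ 'n) set)"
      by (rule mem) (use n2' in \<open>auto simp: simplex_apex_def n_def[symmetric] c_def\<close>)
    moreover have "std_simplex \<subseteq> (\<lambda>y. c *\<^sub>R y) ` (std_simplex :: (real ^ 'n) set)"
      using mem c1 unfolding simplex_char by force
    ultimately show "insert simplex_apex std_simplex \<subseteq> (\<lambda>y. c *\<^sub>R y) ` (std_simplex :: (real ^ 'n) set)"
      by blast
  qed
  have "\<forall>i. \<exists>w. (\<lambda>y. y + w) ` proj_perp (axis i 1) K \<subseteq> proj_perp (axis i 1) (std_simplex :: (real ^ 'n) set)"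
    using assms(4) unfolding contains_translate_def by simp
  then obtain W where W: "\<And>i. (\<lambda>y. y + W i) ` proj_perp (axis i 1) K \<subseteq> proj_perp (axis i 1) (std_simplex :: (real ^ 'n) set)"
    by metis
  have F: "(\<forall>j. j \<noteq> i \<longrightarrow> 0 \<le> y$j + W i$j) \<and> (\<Sum>j\<in>UNIV-{i}. y$j + W i$j) \<le> 1"
    if "y \<in> K" for i y
  proof -
    have "(y - (y \<bullet> axis i 1) *\<^sub>R axis i 1) + W i \<in> proj_perp (axis i 1) (std_simplex :: (real ^ 'n) set)"
      using W[of i] that unfolding proj_perp_def by blast
    then obtain z where z: "z \<in> std_simplex"
      and eq: "y - (y \<bullet> axis i 1) *\<^sub>R axis i 1 + W i = z - (z \<bullet> axis i 1) *\<^sub>R axis i 1"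
      unfolding proj_perp_def by blast
    have zj: "y$j + W i$j = z$j" if "j \<noteq> i" for j
      using arg_cong[OF eq, of "\<lambda>v. v$j"] that by (simp add: axis_def)
    have znn: "\<And>j. 0 \<le> z$j" and zs: "(\<Sum>j\<in>UNIV. z$j) \<le> 1" using z unfolding simplex_char by auto
    have "(\<Sum>j\<in>UNIV-{i}. y$j + W i$j) = (\<Sum>j\<in>UNIV-{i}. z$j)"
      by (rule sum.cong) (auto simp: zj)
    also have "\<dots> \<le> (\<Sum>j\<in>UNIV. z$j)" by (rule sum_mono2) (auto simp: znn)
    finally show ?thesis using zs zj znn by auto
  qed
  show ?thesis
  proof (cases "K = {}")
    case True
    then show ?thesis using part2 by (auto simp: c_def n_def)
  next
    case False
    obtain B where B: "\<And>y. y \<in> K \<Longrightarrow> norm y \<le> B"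
      using compact_imp_bounded[OF assms(2)] unfolding bounded_iff by blast
    define m where "m j = Inf ((\<lambda>y. y$j) ` K)" for j
    have bdd: "bdd_below ((\<lambda>y. y$j) ` K)" for j
    proof (rule bdd_belowI)
      fix a assume "a \<in> (\<lambda>y. y$j) ` K"
      then obtain y where "y \<in> K" "a = y$j" by blast
      then show "-B \<le> a" using B[of y] component_le_norm_cart[of y j] by auto
    qed
    have mle: "m j \<le> y$j" if "y \<in> K" for j y
      unfolding m_def using bdd[of j] that by (auto intro: cInf_lower)
    have Wm: "- m j \<le> W i$j" if "j \<noteq> i" for i j
    proof -
      have "- W i$j \<le> m j" unfolding m_def
        by (rule cInf_greatest) (use False F that in force)+
      then show ?thesis by simp
    qed
    define x where "x = (\<chi> j. - m j)"
    have "(\<lambda>y. y + x) ` K \<subseteq> simplex_D"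
    proof
      fix q assume "q \<in> (\<lambda>y. y + x) ` K"
      then obtain y where y: "y \<in> K" and q: "q = y + x" by blast
      have qj: "q$j = y$j - m j" for j by (simp add: q x_def)
      show "q \<in> simplex_D"
      proof (rule D_mem[OF assms(1)])
        show "0 \<le> q$i" for i using mle[OF y, of i] qj[of i] by simp
        show "(\<Sum>j\<in>UNIV. q$j) - q$i \<le> 1" for i
        proof -
          have "(\<Sum>j\<in>UNIV. q$j) - q$i = (\<Sum>j\<in>UNIV-{i}. q$j)"
            by (simp add: sum.remove[of UNIV i])
          also have "\<dots> \<le> (\<Sum>j\<in>UNIV-{i}. y$j + W i$j)"
            by (rule sum_mono) (use Wm qj in auto)
          also have "\<dots> \<le> 1" using F[OF y] by blast
          finally show ?thesis .
        qed
      qed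
    qed
    then show ?thesis using part2 by (auto simp: c_def n_def)
  qed
qed
end
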